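(* Let $n$ be a positive integer. The lattice $\widetilde\Pi(D_n)$ is modular if and only if $n$ is of one of the following forms: (1) $n=2^\alpha$ for some integer $\alpha\ge 0$; (2) $n=\prod_{i=1}^{k}p_i^{t_i}$ where $p_1,\dots,p_k$ are distinct odd primes and $t_1,\dots,t_k\ge 0$ are integers (i.e., $n$ is odd); (3) $n=2p^{\alpha}$ where $p$ is an odd prime and $\alpha\ge 1$.
   Context: For a positive integer $n$, $D_n=\langle r,s\mid r^n=e,\ s^2=e,\ srs^{-1}=r^{-1}\rangle$ is the dihedral group of order $2n$. For a finite group $G$ and a subgroup $H\le G$, let $\pi_e(H)=\{o(x)\mid x\in H\}$. Let $\mathcal{L}(G)$ be the set of subgroups of $G$; define $H_1\equiv H_2$ iff $\pi_e(H_1)=\pi_e(H_2)$, with class $[H]$. The poset $\widetilde\Pi(G)$ is $\mathcal{L}(G)/\!\equiv$ ordered by $[H_1]\lesssim[H_2]$ iff $\pi_e(H_1)\subseteq\pi_e(H_2)$; for $G=D_n$ it is a lattice. *)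

theory Defs
  imports "HOL-Algebra.Algebra" "HOL-Computational_Algebra.Primes"
begin

text \<open>The dihedral group D_n of order 2n: the element (i, b) stands for r^i s^b
  (with b = True meaning one factor s), 0 \<le> i < n.  Using s r^j = r^(-j) s,
  (r^i s^a)(r^j s^b) = r^(i \<plusminus> j) s^(a+b).\<close>
definition dihedral_group :: "nat \<Rightarrow> (nat \<times> bool) monoid" where
  "dihedral_group n = \<lparr> carrier = {0..<n} \<times> UNIV,
     monoid.mult = (\<lambda>(i, a) (j, b). ((if a then i + (n - j) else i + j) mod n, a \<noteq> b)),
     monoid.one = (0, False) \<rparr>"

definition elem_orders :: "('a, 'b) monoid_scheme \<Rightarrow> 'a set \<Rightarrow> nat set" where
  "elem_orders G H = (\<lambda>x. group.ord G x) ` H"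

text \<open>The poset \<Pi>~(G): classes of subgroups under having the same pi_e, represented
  by their pi_e-sets, ordered by inclusion.\<close>
definition pi_poset :: "('a, 'b) monoid_scheme \<Rightarrow> nat set set" where
  "pi_poset G = {elem_orders G H | H. subgroup H G}"

definition is_join :: "'a set set \<Rightarrow> 'a set \<Rightarrow> 'a set \<Rightarrow> 'a set \<Rightarrow> bool" where
  "is_join S a b z \<longleftrightarrow> z \<in> S \<and> a \<subseteq> z \<and> b \<subseteq> z \<and>
      (\<forall>w\<in>S. a \<subseteq> w \<and> b \<subseteq> w \<longrightarrow> z \<subseteq> w)"

definition is_meet :: "'a set set \<Rightarrow> 'a set \<Rightarrow> 'a set \<Rightarrow> 'a set \<Rightarrow> bool" where
  "is_meet S a b z \<longleftrightarrow> z \<in> S \<and> z \<subseteq> a \<and> z \<subseteq> b \<and>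
      (\<forall>w\<in>S. w \<subseteq> a \<and> w \<subseteq> b \<longrightarrow> w \<subseteq> z)"

definition pjoin :: "'a set set \<Rightarrow> 'a set \<Rightarrow> 'a set \<Rightarrow> 'a set" where
  "pjoin S a b = (THE z. is_join S a b z)"

definition pmeet :: "'a set set \<Rightarrow> 'a set \<Rightarrow> 'a set \<Rightarrow> 'a set" where
  "pmeet S a b = (THE z. is_meet S a b z)"

definition is_lattice_family :: "'a set set \<Rightarrow> bool" where
  "is_lattice_family S \<longleftrightarrow> (\<forall>a\<in>S. \<forall>b\<in>S. (\<exists>z. is_join S a b z) \<and> (\<exists>z. is_meet S a b z))"

definition modular_lattice_family :: "'a set set \<Rightarrow> bool" where
  "modular_lattice_family S \<longleftrightarrow> is_lattice_family S \<and>
     (\<forall>a\<in>S. \<forall>b\<in>S. \<forall>c\<in>S. a \<subseteq> c \<longrightarrow>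
        pjoin S a (pmeet S b c) = pmeet S (pjoin S a b) c)"

end

theory Submission
  imports Defs
begin

lemma dh_idx:
  assumes "j < n"
  shows "(if a then i + (n - j) else i + j) mod n
         = nat ((int i + (if a then - int j else int j)) mod int n)"
proof -
  have "int ((if a then i + (n - j) else i + j) mod n) = (int i + (if a then - int j else int j)) mod int n"
  proof (cases a)
    case True
    have "int (i + (n - j)) = (int i - int j) + int n" using assms by simp
    moreover have "(int i - int j + int n) mod int n = (int i - int j) mod int n"
      by (rule mod_add_self2)
    ultimately show ?thesis using True by (simp add: zmod_int algebra_simps)
  next
    case False then show ?thesis by (simp add: zmod_int)
  qed
  then show ?thesis by (simp flip: \<open>int ((if a then i + (n - j) else i + j) mod n) = (int i + (if a then - int j else int j)) mod int n\<close>)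
qed

lemma dh_carrier: "carrier (dihedral_group n) = {0..<n} \<times> UNIV"
  by (simp add: dihedral_group_def)

lemma dh_mult: "(i, a) \<otimes>\<^bsub>dihedral_group n\<^esub> (j, b) = ((if a then i + (n - j) else i + j) mod n, a \<noteq> b)"
  by (simp add: dihedral_group_def)

lemma dh_one: "\<one>\<^bsub>dihedral_group n\<^esub> = (0, False)"
  by (simp add: dihedral_group_def)

lemma dh_mult_int:
  assumes "j < n"
  shows "(i, a) \<otimes>\<^bsub>dihedral_group n\<^esub> (j, b) = (nat ((int i + (if a then - int j else int j)) mod int n), a \<noteq> b)"
  using dh_idx[OF assms] by (simp add: dh_mult)

lemma dh_group: assumes "n \<ge> 1" shows "group (dihedral_group n)"
proof (rule groupI)
  fix x y assume "x \<in> carrier (dihedral_group n)" "y \<in> carrier (dihedral_group n)"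
  then show "x \<otimes>\<^bsub>dihedral_group n\<^esub> y \<in> carrier (dihedral_group n)"
    using assms by (cases x, cases y) (auto simp: dh_carrier dh_mult)
next
  show "\<one>\<^bsub>dihedral_group n\<^esub> \<in> carrier (dihedral_group n)" using assms by (simp add: dh_carrier dh_one)
next
  fix x assume "x \<in> carrier (dihedral_group n)"
  then show "\<one>\<^bsub>dihedral_group n\<^esub> \<otimes>\<^bsub>dihedral_group n\<^esub> x = x"
    by (cases x) (auto simp: dh_carrier dh_mult dh_one)
next
  fix x assume "x \<in> carrier (dihedral_group n)"
  then obtain i a where x: "x = (i, a)" "i < n" by (cases x) (auto simp: dh_carrier)
  show "\<exists>y\<in>carrier (dihedral_group n). y \<otimes>\<^bsub>dihedral_group n\<^esub> x = \<one>\<^bsub>dihedral_group n\<^esub>"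
  proof (cases a)
    case True
    then show ?thesis using x by (intro bexI[of _ "(i, True)"]) (auto simp: dh_carrier dh_mult dh_one)
  next
    case False
    have "((n - i) mod n + i) mod n = (n - i + i) mod n" by (rule mod_add_left_eq)
    also have "\<dots> = 0" using x by simp
    finally have "((n - i) mod n + i) mod n = 0" .
    then show ?thesis using x False assms
      by (intro bexI[of _ "((n - i) mod n, False)"]) (auto simp: dh_carrier dh_mult dh_one)
  qed
next
  fix x y z assume "x \<in> carrier (dihedral_group n)" "y \<in> carrier (dihedral_group n)" "z \<in> carrier (dihedral_group n)"
  then obtain i a j b k c where xyz: "x = (i, a)" "y = (j, b)" "z = (k, c)" "i < n" "j < n" "k < n"
    by (cases x, cases y, cases z) (auto simp: dh_carrier)
  have n0: "int n > 0" using assms by simp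
  define s where "s = (\<lambda>(a::bool) (j::int). if a then - j else j)"
  have jk: "nat ((int j + s b (int k)) mod int n) < n" using n0
    by (simp add: nat_less_iff)
  have ij: "nat ((int i + s a (int j)) mod int n) < n" using n0
    by (simp add: nat_less_iff)
  have "x \<otimes>\<^bsub>dihedral_group n\<^esub> y \<otimes>\<^bsub>dihedral_group n\<^esub> z
      = (nat ((int (nat ((int i + s a (int j)) mod int n)) + s (a \<noteq> b) (int k)) mod int n), (a \<noteq> b) \<noteq> c)"
    using xyz by (simp add: dh_mult_int s_def)
  also have "\<dots> = (nat ((int i + s a (int j) + s (a \<noteq> b) (int k)) mod int n), (a \<noteq> b) \<noteq> c)"
    using n0 by (simp add: s_def mod_add_left_eq mod_diff_left_eq)
  also have "\<dots> = (nat ((int i + s a (int (nat ((int j + s b (int k)) mod int n)))) mod int n), a \<noteq> (b \<noteq> c))"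
    using n0 by (cases a; cases b; simp add: s_def mod_add_right_eq mod_diff_right_eq algebra_simps)
  also have "\<dots> = x \<otimes>\<^bsub>dihedral_group n\<^esub> (y \<otimes>\<^bsub>dihedral_group n\<^esub> z)"
    using xyz jk by (simp add: dh_mult_int s_def)
  finally show "x \<otimes>\<^bsub>dihedral_group n\<^esub> y \<otimes>\<^bsub>dihedral_group n\<^esub> z = x \<otimes>\<^bsub>dihedral_group n\<^esub> (y \<otimes>\<^bsub>dihedral_group n\<^esub> z)" .
qed

lemma dvd_mult_iff_div_gcd:
  fixes n i k :: nat assumes "n > 0"
  shows "n dvd i * k \<longleftrightarrow> (n div gcd i n) dvd k"
proof -
  define g where "g = gcd i n"
  have g0: "g > 0" using assms by (simp add: g_def)
  obtain n' where n': "n = g * n'" unfolding g_def by (metis gcd_dvd2 dvdE)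
  obtain i' where i': "i = g * i'" unfolding g_def by (metis gcd_dvd1 dvdE)
  have cop: "coprime i' n'"
  proof -
    have "gcd i n = g * gcd i' n'" using n' i' by (simp add: gcd_mult_left)
    then have "g = g * gcd i' n'" unfolding g_def[symmetric] .
    then have "gcd i' n' = 1" using g0 by simp
    then show ?thesis by (simp add: coprime_iff_gcd_eq_1)
  qed
  have "n dvd i * k \<longleftrightarrow> g * n' dvd g * (i' * k)" using n' i' by (simp add: mult.assoc)
  also have "\<dots> \<longleftrightarrow> n' dvd i' * k" using g0 by simp
  also have "\<dots> \<longleftrightarrow> n' dvd k" using cop by (simp add: coprime_commute coprime_dvd_mult_right_iff)
  also have "n' = n div g" using n' g0 by simp
  finally show ?thesis by (simp add: g_def)
qed

lemma dh_pow_rot: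
  assumes "n \<ge> 1" "i < n"
  shows "(i, False) [^]\<^bsub>dihedral_group n\<^esub> (k::nat) = (i * k mod n, False)"
proof (induction k)
  case 0 then show ?case by (simp add: dh_one)
next
  case (Suc k) then show ?case by (simp add: dh_mult mod_add_right_eq algebra_simps)
qed

lemma dh_pow_refl:
  assumes "n \<ge> 1" "i < n"
  shows "(i, True) [^]\<^bsub>dihedral_group n\<^esub> (k::nat) = (if even k then (0, False) else (i, True))"
proof (induction k)
  case 0 then show ?case by (simp add: dh_one)
next
  case (Suc k) then show ?case using assms by (auto simp: dh_mult)
qed

lemma dh_ord_rot:
  assumes "n \<ge> 1" "i < n"
  shows "group.ord (dihedral_group n) (i, False) = n div gcd i n"
proof -
  interpret group "dihedral_group n" using dh_group assms(1) .
  have c: "(i, False) \<in> carrier (dihedral_group n)" using assms by (simp add: dh_carrier)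
  show ?thesis
    unfolding ord_unique[OF c]
  proof
    fix k :: nat
    have "(i, False) [^]\<^bsub>dihedral_group n\<^esub> k = \<one>\<^bsub>dihedral_group n\<^esub> \<longleftrightarrow> i * k mod n = 0"
      using assms by (simp add: dh_pow_rot dh_one)
    also have "\<dots> \<longleftrightarrow> n dvd i * k" by (simp add: dvd_eq_mod_eq_0)
    also have "\<dots> \<longleftrightarrow> (n div gcd i n) dvd k" using assms dvd_mult_iff_div_gcd[of n i k] by simp
    finally show "(i, False) [^]\<^bsub>dihedral_group n\<^esub> k = \<one>\<^bsub>dihedral_group n\<^esub> \<longleftrightarrow> (n div gcd i n) dvd k" .
  qed
qed

lemma dh_ord_refl:
  assumes "n \<ge> 1" "i < n"
  shows "group.ord (dihedral_group n) (i, True) = 2"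
proof -
  interpret group "dihedral_group n" using dh_group assms(1) .
  have c: "(i, True) \<in> carrier (dihedral_group n)" using assms by (simp add: dh_carrier)
  show ?thesis
    unfolding ord_unique[OF c]
    using assms by (simp add: dh_pow_refl dh_one)
qed

lemma rot_struct:
  assumes n1: "n \<ge> 1" and H: "subgroup H (dihedral_group n)"
  shows "\<exists>g. g dvd n \<and> g > 0 \<and> (\<forall>i. (i, False) \<in> H \<longleftrightarrow> i < n \<and> g dvd i)"
proof -
  interpret group "dihedral_group n" using dh_group n1 .
  have Ilt: "i < n" if "(i, b) \<in> H" for i b
    using subgroup.subset[OF H] that by (auto simp: dh_carrier)
  have add: "((i + j) mod n, False) \<in> H" if "(i, False) \<in> H" "(j, False) \<in> H" for i j
    using subgroup.m_closed[OF H that] by (simp add: dh_mult)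
  have zero: "(0, False) \<in> H" using subgroup.one_closed[OF H] by (simp add: dh_one)
  have mul: "(i * k mod n, False) \<in> H" if "(i, False) \<in> H" for i k
  proof (induction k)
    case 0 then show ?case using zero by simp
  next
    case (Suc k)
    have "(i * k mod n + i) mod n = i * Suc k mod n" by (simp add: mod_add_right_eq algebra_simps)
    then show ?case using add[OF Suc that] by simp
  qed
  define A where "A = {i. (i, False) \<in> H \<and> 0 < i} \<union> {n}"
  have "{i. (i, False) \<in> H \<and> 0 < i} \<subseteq> {..n}" using Ilt by (auto intro: less_imp_le)
  then have finA: "finite A" unfolding A_def using finite_subset by auto
  define g where "g = Min A"
  have gA: "g \<in> A" unfolding g_def using finA by (intro Min_in) (auto simp: A_def)
  have gle: "g \<le> x" if "x \<in> A" for x unfolding g_def using finA that by simp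
  have g0: "g > 0" using gA n1 by (auto simp: A_def)
  have gn: "g \<le> n" using gle by (simp add: A_def)
  have key: "g dvd x" if xA: "x \<in> A" for x
  proof (cases "g = n")
    case True
    have "x \<le> n" using xA Ilt by (auto simp: A_def intro: less_imp_le)
    then have "x = n" using gle[OF xA] True by simp
    then show ?thesis using True by simp
  next
    case False
    then have gH: "(g, False) \<in> H" using gA by (auto simp: A_def)
    obtain u v where uv: "g * u = x * v + gcd g x" using bezout_nat[of g x] g0 by auto
    define d where "d = gcd g x"
    have d0: "d > 0" using g0 by (simp add: d_def)
    have dg: "d \<le> g" using g0 by (simp add: d_def gcd_le1_nat)
    have gltn: "g < n" using False gn by simp
    have xm: "(x mod n, False) \<in> H"
    proof (cases "x = n")
      case True then show ?thesis using zero by simp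
    next
      case False then show ?thesis using xA Ilt by (auto simp: A_def)
    qed
    obtain m where m: "n = Suc m" using n1 by (cases n) auto
    have "((g * u) mod n + ((x mod n) * (v * m)) mod n) mod n \<in> {i. (i, False) \<in> H}"
      using add[OF mul[OF gH] mul[OF xm]] by simp
    moreover have "((g * u) mod n + ((x mod n) * (v * m)) mod n) mod n = (g * u + x * (v * m)) mod n"
      by (simp add: mod_add_eq mod_mult_left_eq)
    moreover have "g * u + x * (v * m) = d + (x * v) * n"
      using uv m by (simp add: d_def algebra_simps)
    moreover have "(d + (x * v) * n) mod n = d" using dg gltn by simp
    ultimately have "(d, False) \<in> H" by simp
    then have "d \<in> A" using d0 by (simp add: A_def)
    then have "g \<le> d" by (rule gle)
    then have "d = g" using dg by simp
    then show ?thesis by (metis d_def gcd_dvd2)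
  qed
  have gdvd: "g dvd n" using key by (simp add: A_def)
  have "(i, False) \<in> H \<longleftrightarrow> i < n \<and> g dvd i" for i
  proof
    assume iH: "(i, False) \<in> H"
    show "i < n \<and> g dvd i"
    proof (cases "i = 0")
      case True then show ?thesis using n1 by simp
    next
      case False then show ?thesis using iH Ilt key by (auto simp: A_def)
    qed
  next
    assume i: "i < n \<and> g dvd i"
    then obtain k where k: "i = g * k" by (auto elim: dvdE)
    show "(i, False) \<in> H"
    proof (cases "g = n")
      case True
      then have "i = 0" using i k by (cases k) auto
      then show ?thesis using zero by simp
    next
      case False
      then have gH: "(g, False) \<in> H" using gA by (auto simp: A_def)
      show ?thesis using mul[OF gH, of k] i k by simp
    qed
  qed
  then show ?thesis using gdvd g0 by blast
qed

definition Dv :: "nat \<Rightarrow> nat set" where "Dv m = {d. d dvd m}"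

definition SS :: "nat \<Rightarrow> nat set set" where
  "SS n = {Dv m \<union> E | m E. m dvd n \<and> E \<subseteq> {2}}"

lemma div_dvd_div_of_dvd:
  fixes a b n :: nat
  assumes "a dvd b" "b dvd n" "a > 0" "b > 0"
  shows "n div b dvd n div a"
proof -
  obtain q where q: "n = b * q" using assms(2) by (auto elim: dvdE)
  obtain r where r: "b = a * r" using assms(1) by (auto elim: dvdE)
  have "n div b = q" using q assms by simp
  moreover have "n div a = r * q" using q r assms by simp
  ultimately show ?thesis by simp
qed

lemma elem_orders_sub:
  assumes n1: "n \<ge> 1" and H: "subgroup H (dihedral_group n)"
    and g: "g dvd n" "g > 0" and rot: "\<And>i. (i, False) \<in> H \<longleftrightarrow> i < n \<and> g dvd i"
  shows "elem_orders (dihedral_group n) H = Dv (n div g) \<union> (if \<exists>i. (i, True) \<in> H then {2} else {})"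
proof -
  have Ilt: "i < n" if "(i, b) \<in> H" for i b
    using subgroup.subset[OF H] that by (auto simp: dh_carrier)
  show ?thesis
  proof (rule Set.set_eqI)
    fix d
    show "d \<in> elem_orders (dihedral_group n) H \<longleftrightarrow> d \<in> Dv (n div g) \<union> (if \<exists>i. (i, True) \<in> H then {2} else {})"
    proof
      assume "d \<in> elem_orders (dihedral_group n) H"
      then obtain i b where ib: "(i, b) \<in> H" "d = group.ord (dihedral_group n) (i, b)"
        unfolding elem_orders_def by auto
      have i: "i < n" using Ilt[OF ib(1)] .
      show "d \<in> Dv (n div g) \<union> (if \<exists>i. (i, True) \<in> H then {2} else {})"
      proof (cases b)
        case True
        then show ?thesis using ib i n1 dh_ord_refl by auto
      next
        case False
        then have gi: "g dvd i" using rot ib by simp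
        have "d = n div gcd i n" using ib False i n1 dh_ord_rot by simp
        moreover have "n div gcd i n dvd n div g"
          using gi g n1 by (intro div_dvd_div_of_dvd) auto
        ultimately show ?thesis by (simp add: Dv_def)
      qed
    next
      assume d: "d \<in> Dv (n div g) \<union> (if \<exists>i. (i, True) \<in> H then {2} else {})"
      show "d \<in> elem_orders (dihedral_group n) H"
      proof (cases "d \<in> Dv (n div g)")
        case False
        then obtain i where "(i, True) \<in> H" "d = 2" using d by (auto split: if_splits)
        then show ?thesis using Ilt dh_ord_refl n1 unfolding elem_orders_def by (auto intro!: image_eqI[of _ _ "(i, True)"])
      next
        case True
        then obtain e where e: "n div g = d * e" by (auto simp: Dv_def elim: dvdE)
        have ng: "n = g * (d * e)" using e g by (metis dvd_mult_div_cancel)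
        then have d0: "d > 0" and e0: "e > 0" using n1 by auto
        show ?thesis
        proof (cases "d = 1")
          case True
          have "(0, False) \<in> H" using rot g n1 by simp
          moreover have "group.ord (dihedral_group n) (0, False) = 1" using dh_ord_rot[of n 0] n1 by simp
          ultimately show ?thesis using True unfolding elem_orders_def by (auto intro!: image_eqI[of _ _ "(0, False)"])
        next
          case False
          define i where "i = g * e"
          have "i * 1 < i * d" using False d0 g e0 by (simp add: i_def)
          then have ilt: "i < n" using ng by (simp add: i_def algebra_simps)
          have iH: "(i, False) \<in> H" using rot ilt by (simp add: i_def)
          have "gcd i n = i" using ng by (simp add: i_def gcd_mult_distrib_nat[symmetric] algebra_simps)
          then have "group.ord (dihedral_group n) (i, False) = d"
            using dh_ord_rot[OF n1 ilt] ng g e0 by (simp add: i_def algebra_simps)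
          then show ?thesis using iH unfolding elem_orders_def by (auto intro!: image_eqI[of _ _ "(i, False)"])
        qed
      qed
    qed
  qed
qed

lemma sub_exists:
  assumes n1: "n \<ge> 1" and m: "m dvd n" and E: "E \<subseteq> {2}"
  shows "\<exists>H. subgroup H (dihedral_group n) \<and> elem_orders (dihedral_group n) H = Dv m \<union> E"
proof -
  interpret group "dihedral_group n" using dh_group n1 .
  define g where "g = n div m"
  have m0: "m > 0" using m n1 by (auto intro: Nat.gr0I)
  have gn: "g dvd n" using m by (metis g_def dvd_div_mult_self dvd_triv_left)
  have g0: "g > 0" using m n1 m0 by (simp add: g_def dvd_imp_le div_greater_zero_iff)
  have ng: "n div g = m" using m m0 n1 by (simp add: g_def div_div_eq_right)
  define H where "H = {(i, b). i < n \<and> g dvd i \<and> (b \<longrightarrow> 2 \<in> E)}"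
  have dvdidx: "g dvd (if a then i + (n - j) else i + j) mod n" if "g dvd i" "g dvd j" "j < n" for a i j
    using that gn by (intro dvd_mod) auto
  have sub: "subgroup H (dihedral_group n)"
  proof (rule subgroupI)
    show "H \<subseteq> carrier (dihedral_group n)" by (auto simp: H_def dh_carrier)
    show "H \<noteq> {}" using n1 by (auto simp: H_def intro!: exI[of _ 0])
  next
    fix x assume xH: "x \<in> H"
    then obtain i b where x: "x = (i, b)" "i < n" "g dvd i" "b \<longrightarrow> 2 \<in> E" by (auto simp: H_def)
    have xc: "x \<in> carrier (dihedral_group n)" using x by (simp add: dh_carrier)
    show "inv\<^bsub>dihedral_group n\<^esub> x \<in> H"
    proof (cases b)
      case True
      have "x \<otimes>\<^bsub>dihedral_group n\<^esub> x = \<one>\<^bsub>dihedral_group n\<^esub>" using x True by (simp add: dh_mult dh_one)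
      then have "inv\<^bsub>dihedral_group n\<^esub> x = x" using xc by (intro inv_equality) auto
      then show ?thesis using xH by simp
    next
      case False
      have "((n - i) mod n + i) mod n = (n - i + i) mod n" by (rule mod_add_left_eq)
      also have "\<dots> = 0" using x by simp
      finally have e0: "((n - i) mod n + i) mod n = 0" .
      have yc: "((n - i) mod n, False) \<in> carrier (dihedral_group n)" using n1 by (simp add: dh_carrier)
      have "inv\<^bsub>dihedral_group n\<^esub> x = ((n - i) mod n, False)"
        using xc yc x False e0 by (intro inv_equality) (auto simp: dh_mult dh_one)
      moreover have "g dvd (n - i) mod n" using gn x by (intro dvd_mod) auto
      ultimately show ?thesis using n1 by (simp add: H_def)
    qed
  next
    fix x y assume "x \<in> H" "y \<in> H"
    then obtain i a j b where "x = (i, a)" "i < n" "g dvd i" "a \<longrightarrow> 2 \<in> E"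
      "y = (j, b)" "j < n" "g dvd j" "b \<longrightarrow> 2 \<in> E" by (auto simp: H_def)
    then show "x \<otimes>\<^bsub>dihedral_group n\<^esub> y \<in> H" using dvdidx n1 by (auto simp: H_def dh_mult)
  qed
  have rot: "(i, False) \<in> H \<longleftrightarrow> i < n \<and> g dvd i" for i by (simp add: H_def)
  have refl: "(\<exists>i. (i, True) \<in> H) \<longleftrightarrow> 2 \<in> E" using n1 by (auto simp: H_def intro!: exI[of _ 0])
  have "elem_orders (dihedral_group n) H = Dv m \<union> E"
    using elem_orders_sub[OF n1 sub gn g0 rot] ng refl E by auto
  then show ?thesis using sub by blast
qed

lemma pi_poset_eq:
  assumes n1: "n \<ge> 1"
  shows "pi_poset (dihedral_group n) = SS n"
proof (rule Set.set_eqI)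
  fix Y
  show "Y \<in> pi_poset (dihedral_group n) \<longleftrightarrow> Y \<in> SS n"
  proof
    assume "Y \<in> pi_poset (dihedral_group n)"
    then obtain H where H: "subgroup H (dihedral_group n)" "Y = elem_orders (dihedral_group n) H"
      unfolding pi_poset_def by auto
    obtain g where g: "g dvd n" "g > 0" "\<And>i. (i, False) \<in> H \<longleftrightarrow> i < n \<and> g dvd i"
      using rot_struct[OF n1 H(1)] by blast
    have "Y = Dv (n div g) \<union> (if \<exists>i. (i, True) \<in> H then {2} else {})"
      using elem_orders_sub[OF n1 H(1) g] H(2) by simp
    moreover have "n div g dvd n" using g by (metis dvd_div_mult_self dvd_triv_left)
    moreover have "(if \<exists>i. (i, True) \<in> H then {2} else {}) \<subseteq> {2::nat}" by simp
    ultimately show "Y \<in> SS n" unfolding SS_def by blast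
  next
    assume "Y \<in> SS n"
    then obtain m E where "Y = Dv m \<union> E" "m dvd n" "E \<subseteq> {2}" unfolding SS_def by auto
    then obtain H where "subgroup H (dihedral_group n)" "elem_orders (dihedral_group n) H = Y"
      using sub_exists[OF n1, of m E] by auto
    then show "Y \<in> pi_poset (dihedral_group n)"
      unfolding pi_poset_def by blast
  qed
qed

lemma Dv_inter: "Dv a \<inter> Dv b = Dv (gcd a b)"
  by (auto simp: Dv_def)

lemma Dv_mono: "a dvd b \<Longrightarrow> Dv a \<subseteq> Dv b"
  by (auto simp: Dv_def intro: dvd_trans)

lemma SS_elem: "m dvd n \<Longrightarrow> E \<subseteq> {2} \<Longrightarrow> Dv m \<union> E \<in> SS n"
  unfolding SS_def by blast

lemma Dv_2: "Dv 2 = Dv 1 \<union> {2}"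
proof -
  have "d dvd (2::nat) \<longleftrightarrow> d = 1 \<or> d = 2" for d
  proof
    assume d: "d dvd (2::nat)"
    then have "d \<le> 2" using dvd_imp_le by auto
    moreover have "d \<noteq> 0" using d by (rule_tac notI) simp
    ultimately show "d = 1 \<or> d = 2" by arith
  qed auto
  then show ?thesis by (auto simp: Dv_def)
qed

lemma SS_canon:
  assumes "x \<in> SS n"
  obtains m E where "x = Dv m \<union> E" "m dvd n" "m \<noteq> 2" "E \<subseteq> {2}"
proof -
  obtain m E where mE: "x = Dv m \<union> E" "m dvd n" "E \<subseteq> {2}" using assms unfolding SS_def by auto
  show ?thesis
  proof (cases "m = 2")
    case True
    then have "x = Dv 1 \<union> {2}" using mE Dv_2 by auto
    then show ?thesis using that[of 1 "{2}"] by simp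
  next
    case False then show ?thesis using that mE by blast
  qed
qed

lemma SS_inter_eq:
  assumes "Ea \<subseteq> {2}" "Eb \<subseteq> {2}"
  shows "(Dv ma \<union> Ea) \<inter> (Dv mb \<union> Eb) = Dv (gcd ma mb) \<union> ({2} \<inter> (Dv ma \<union> Ea) \<inter> (Dv mb \<union> Eb))"
  using assms by (auto simp: Dv_def)

lemma SS_inter:
  assumes "a \<in> SS n" "b \<in> SS n"
  shows "a \<inter> b \<in> SS n"
proof -
  obtain ma Ea where a: "a = Dv ma \<union> Ea" "ma dvd n" "Ea \<subseteq> {2}" using assms(1) unfolding SS_def by auto
  obtain mb Eb where b: "b = Dv mb \<union> Eb" "mb dvd n" "Eb \<subseteq> {2}" using assms(2) unfolding SS_def by auto
  have "a \<inter> b = Dv (gcd ma mb) \<union> ({2} \<inter> a \<inter> b)" using SS_inter_eq[OF a(3) b(3)] a b by simp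
  moreover have "gcd ma mb dvd n" using a(2) by (metis dvd_trans gcd_dvd1)
  ultimately show ?thesis using SS_elem[of "gcd ma mb" n "{2} \<inter> a \<inter> b"] by auto
qed

lemma meet_SS: "a \<in> SS n \<Longrightarrow> b \<in> SS n \<Longrightarrow> is_meet (SS n) a b (a \<inter> b)"
  unfolding is_meet_def using SS_inter by blast

lemma join_SS:
  assumes "ma dvd n" "mb dvd n" "ma \<noteq> 2" "mb \<noteq> 2" "Ea \<subseteq> {2}" "Eb \<subseteq> {2}"
  shows "is_join (SS n) (Dv ma \<union> Ea) (Dv mb \<union> Eb) (Dv (lcm ma mb) \<union> Ea \<union> Eb)"
  unfolding is_join_def
proof (intro conjI ballI impI)
  have "lcm ma mb dvd n" using assms by simp
  then show "Dv (lcm ma mb) \<union> Ea \<union> Eb \<in> SS n" using SS_elem[of "lcm ma mb" n "Ea \<union> Eb"] assms by (simp add: Un_assoc)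
  show "Dv ma \<union> Ea \<subseteq> Dv (lcm ma mb) \<union> Ea \<union> Eb" using Dv_mono[of ma "lcm ma mb"] by auto
  show "Dv mb \<union> Eb \<subseteq> Dv (lcm ma mb) \<union> Ea \<union> Eb" using Dv_mono[of mb "lcm ma mb"] by auto
next
  fix w assume w: "w \<in> SS n" and sub: "Dv ma \<union> Ea \<subseteq> w \<and> Dv mb \<union> Eb \<subseteq> w"
  obtain m E where mE: "w = Dv m \<union> E" "m dvd n" "E \<subseteq> {2}" using w unfolding SS_def by auto
  have "ma \<in> w" "mb \<in> w" using sub by (auto simp: Dv_def)
  then have "ma dvd m" "mb dvd m" using mE assms by (auto simp: Dv_def)
  then have "Dv (lcm ma mb) \<subseteq> Dv m" by (intro Dv_mono) simp
  then show "Dv (lcm ma mb) \<union> Ea \<union> Eb \<subseteq> w" using sub mE by auto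
qed

lemma pjoin_eq: "is_join S a b z \<Longrightarrow> pjoin S a b = z"
  unfolding pjoin_def by (rule the_equality) (auto simp: is_join_def)

lemma pmeet_eq: "is_meet S a b z \<Longrightarrow> pmeet S a b = z"
  unfolding pmeet_def by (rule the_equality) (auto simp: is_meet_def)

lemma lattice_SS: "is_lattice_family (SS n)"
  unfolding is_lattice_family_def
proof (intro ballI conjI)
  fix a b assume a: "a \<in> SS n" and b: "b \<in> SS n"
  show "\<exists>z. is_meet (SS n) a b z" using meet_SS[OF a b] by blast
  obtain ma Ea where "a = Dv ma \<union> Ea" "ma dvd n" "ma \<noteq> 2" "Ea \<subseteq> {2}" using SS_canon[OF a] by blast
  moreover obtain mb Eb where "b = Dv mb \<union> Eb" "mb dvd n" "mb \<noteq> 2" "Eb \<subseteq> {2}" using SS_canon[OF b] by blast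
  ultimately show "\<exists>z. is_join (SS n) a b z" using join_SS by blast
qed

definition PP :: "nat \<Rightarrow> bool" where
  "PP n \<longleftrightarrow> (\<forall>e1 e2. e1 dvd n \<longrightarrow> e2 dvd n \<longrightarrow> even e1 \<longrightarrow> even e2 \<longrightarrow> e1 \<noteq> 2 \<longrightarrow> e2 \<noteq> 2
              \<longrightarrow> gcd e1 e2 \<noteq> 2)"

lemma odd_lcm: "odd (a::nat) \<Longrightarrow> odd b \<Longrightarrow> odd (lcm a b)"
proof -
  assume "odd a" "odd b"
  then have "odd (a * b)" by simp
  moreover have "lcm a b dvd a * b" by (intro lcm_least) auto
  ultimately show ?thesis by (metis dvd_trans)
qed

lemma dvd_2_cases: "(d::nat) dvd 2 \<Longrightarrow> d = 1 \<or> d = 2"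
proof -
  assume d: "d dvd 2"
  then have "d \<le> 2" using dvd_imp_le by auto
  moreover have "d \<noteq> 0" using d by (rule_tac notI) simp
  ultimately show "d = 1 \<or> d = 2" by arith
qed

lemma modular_SS:
  assumes n1: "n \<ge> 1" and P: "PP n"
  shows "modular_lattice_family (SS n)"
  unfolding modular_lattice_family_def
proof (intro conjI ballI impI)
  show "is_lattice_family (SS n)" by (rule lattice_SS)
  fix a b c assume aS: "a \<in> SS n" and bS: "b \<in> SS n" and cS: "c \<in> SS n" and ac: "a \<subseteq> c"
  obtain ma Ea where a: "a = Dv ma \<union> Ea" "ma dvd n" "ma \<noteq> 2" "Ea \<subseteq> {2}" using SS_canon[OF aS] by blast
  obtain mb Eb where b: "b = Dv mb \<union> Eb" "mb dvd n" "mb \<noteq> 2" "Eb \<subseteq> {2}" using SS_canon[OF bS] by blast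
  obtain mc Ec where c: "c = Dv mc \<union> Ec" "mc dvd n" "mc \<noteq> 2" "Ec \<subseteq> {2}" using SS_canon[OF cS] by blast
  define J where "J = Dv (lcm ma mb) \<union> Ea \<union> Eb"
  have jab: "is_join (SS n) a b J" unfolding J_def a(1) b(1) using join_SS a b by blast
  then have JS: "J \<in> SS n" by (simp add: is_join_def)
  have R: "pmeet (SS n) (pjoin (SS n) a b) c = J \<inter> c"
    using pjoin_eq[OF jab] pmeet_eq[OF meet_SS[OF JS cS]] by simp
  define bc where "bc = b \<inter> c"
  have bcS: "bc \<in> SS n" unfolding bc_def using SS_inter[OF bS cS] .
  have pm: "pmeet (SS n) b c = bc" unfolding bc_def using pmeet_eq[OF meet_SS[OF bS cS]] .
  obtain g' F where g': "bc = Dv g' \<union> F" "g' dvd n" "g' \<noteq> 2" "F \<subseteq> {2}" using SS_canon[OF bcS] by blast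
  define L where "L = Dv (lcm ma g') \<union> Ea \<union> F"
  have jabc: "is_join (SS n) a bc L" unfolding L_def a(1) g'(1) using join_SS a g' by blast
  have Lpj: "pjoin (SS n) a (pmeet (SS n) b c) = L" using pm pjoin_eq[OF jabc] by simp
  have aL: "a \<subseteq> L" and bcL: "bc \<subseteq> L" using jabc by (auto simp: is_join_def)
  have "L \<subseteq> c" using jabc cS ac by (auto simp: is_join_def bc_def)
  moreover have "L \<subseteq> J"
  proof -
    have "a \<subseteq> J" "bc \<subseteq> J" using jab by (auto simp: is_join_def bc_def)
    then show ?thesis using jabc JS by (auto simp: is_join_def)
  qed
  moreover have "J \<inter> c \<subseteq> L"
  proof
    fix z assume z: "z \<in> J \<inter> c"
    show "z \<in> L"
    proof (rule ccontr)
      assume zL: "z \<notin> L"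
      then have za: "z \<notin> a" and zbc: "z \<notin> bc" using aL bcL by auto
      have zc: "z \<in> c" using z by simp
      have "z \<notin> Ea" using za a(1) by auto
      moreover have "z \<notin> Eb" using zbc zc b(1) by (auto simp: bc_def)
      ultimately have zl: "z dvd lcm ma mb" using z by (auto simp: J_def Dv_def)
      have mamc: "ma dvd mc"
      proof -
        have "ma \<in> c" using ac a(1) by (auto simp: Dv_def)
        then show ?thesis using c a(3) by (auto simp: Dv_def)
      qed
      show False
      proof (cases "z \<in> Dv mc")
        case False
        then have z2: "z = 2" using zc c by auto
        have "odd ma"
        proof
          assume "even ma" then have "2 \<in> a" using a(1) by (simp add: Dv_def)
          then show False using za z2 by simp
        qed
        moreover have "odd mb"
        proof
          assume "even mb" then have "2 \<in> b" using b(1) by (simp add: Dv_def)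
          then show False using zbc z2 zc by (simp add: bc_def)
        qed
        ultimately have "odd (lcm ma mb)" by (rule odd_lcm)
        then show False using zl z2 by simp
      next
        case True
        then have zmc: "z dvd mc" by (simp add: Dv_def)
        define G where "G = gcd mb mc"
        have "lcm ma G = gcd (lcm ma mb) (lcm ma mc)" unfolding G_def by (rule lcm_gcd_distrib)
        also have "lcm ma mc = mc" using mamc by (simp add: lcm_proj2_if_dvd)
        finally have zG: "z dvd lcm ma G" using zl zmc by simp
        have bcG: "Dv G \<subseteq> bc" unfolding bc_def b(1) c(1) G_def by (auto simp: Dv_def)
        show False
        proof (cases "G = 2")
          case False
          have "G \<in> Dv G" by (simp add: Dv_def)
          then have "G \<in> bc" using bcG by blast
          then have "G \<in> Dv g' \<union> F" using g'(1) by simp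
          then have "G dvd g'" using False g'(4) by (auto simp: Dv_def)
          then have "lcm ma G dvd lcm ma g'" by (simp add: lcm_mono)
          then have "z \<in> L" using zG unfolding L_def Dv_def by (auto intro: dvd_trans)
          then show False using zL by simp
        next
          case True
          have "(2::nat) \<in> Dv G" using True by (simp add: Dv_def)
          then have zne2: "z \<noteq> 2" using bcG zbc by blast
          show False
          proof (cases "even z")
            case False
            have "z dvd lcm ma 2" using zG True by simp
            also have "lcm ma 2 dvd 2 * ma" by (intro lcm_least) auto
            finally have "z dvd 2 * ma" .
            moreover have "coprime z 2" using False by simp
            ultimately have "z dvd ma" using coprime_dvd_mult_right_iff by blast
            then show False using za a(1) by (simp add: Dv_def)
          next
            case True
            have "even mb" using \<open>G = 2\<close> unfolding G_def by (metis gcd_dvd1 dvd_trans)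
            moreover have "z dvd n" using zmc c(2) by (rule dvd_trans)
            ultimately have "gcd z mb \<noteq> 2" using P[unfolded PP_def, rule_format, of z mb] True zne2 b(2,3) by simp
            moreover have "gcd z mb dvd 2"
            proof -
              have "gcd z mb dvd gcd mc mb" using zmc by (meson dvd_trans gcd_dvd1 gcd_dvd2 gcd_greatest)
              then show ?thesis using \<open>G = 2\<close> unfolding G_def by (simp add: gcd.commute)
            qed
            moreover have "2 dvd gcd z mb" using True \<open>even mb\<close> by (rule gcd_greatest)
            ultimately show False using dvd_antisym by blast
          qed
        qed
      qed
    qed
  qed
  ultimately show "pjoin (SS n) a (pmeet (SS n) b c) = pmeet (SS n) (pjoin (SS n) a b) c"
    using Lpj R by auto
qed

lemma nonmod_SS:
  assumes n1: "n \<ge> 1" and e1: "e1 dvd n" and e2: "e2 dvd n" "even e2" "e2 \<noteq> 2"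
    and g: "gcd e1 e2 = 2" and k: "odd k" "k dvd e1" "k > 1"
  shows "\<not> modular_lattice_family (SS n)"
proof
  assume M: "modular_lattice_family (SS n)"
  have ev1: "even e1" using g by (metis gcd_dvd1)
  have k2: "k \<noteq> 2" using k by auto
  define a where "a = Dv k \<union> {2}"
  define b where "b = Dv e2 \<union> {}"
  define c where "c = Dv e1 \<union> {}"
  have kn: "k dvd n" using k e1 by (rule_tac dvd_trans)
  have aS: "a \<in> SS n" unfolding a_def using SS_elem kn by blast
  have bS: "b \<in> SS n" unfolding b_def using SS_elem e2 by blast
  have cS: "c \<in> SS n" unfolding c_def using SS_elem e1 by blast
  have ac: "a \<subseteq> c" unfolding a_def c_def using k ev1 by (auto simp: Dv_def intro: dvd_trans)
  have bc: "b \<inter> c = Dv 1 \<union> {2}" unfolding b_def c_def using Dv_inter[of e2 e1] g Dv_2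
    by (simp add: gcd.commute)
  have "pmeet (SS n) b c = Dv 1 \<union> {2}" using pmeet_eq[OF meet_SS[OF bS cS]] bc by simp
  moreover have "is_join (SS n) a (Dv 1 \<union> {2}) (Dv (lcm k 1) \<union> {2} \<union> {2})"
    unfolding a_def using join_SS[of k n 1 "{2}" "{2}"] kn k2 by simp
  ultimately have L: "pjoin (SS n) a (pmeet (SS n) b c) = a" using pjoin_eq by (simp add: a_def)
  have "is_join (SS n) a b (Dv (lcm k e2) \<union> {2} \<union> {})"
    unfolding a_def b_def using join_SS[of k n e2 "{2}" "{}"] kn k2 e2 by simp
  then have J: "pjoin (SS n) a b = Dv (lcm k e2) \<union> {2}" using pjoin_eq by simp
  then have JS: "Dv (lcm k e2) \<union> {2} \<in> SS n" using \<open>is_join (SS n) a b _\<close> by (simp add: is_join_def)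
  have R: "pmeet (SS n) (pjoin (SS n) a b) c = (Dv (lcm k e2) \<union> {2}) \<inter> c"
    using J pmeet_eq[OF meet_SS[OF JS cS]] by simp
  have "pjoin (SS n) a (pmeet (SS n) b c) = pmeet (SS n) (pjoin (SS n) a b) c"
    using M aS bS cS ac unfolding modular_lattice_family_def by blast
  then have eq: "a = (Dv (lcm k e2) \<union> {2}) \<inter> c" using L R by simp
  have cop: "coprime 2 k" using k by simp
  have "2 * k dvd lcm k e2" using cop e2(2) by (intro divides_mult) auto
  moreover have "2 * k dvd e1" using cop ev1 k by (intro divides_mult) auto
  ultimately have "2 * k \<in> a" using eq by (simp add: c_def Dv_def)
  moreover have "\<not> 2 * k dvd k" using k by (auto dest: dvd_imp_le)
  ultimately show False using k by (auto simp: a_def Dv_def)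
qed

lemma pow_decomp:
  fixes e p :: nat
  assumes "e > 0" "p > 1"
  shows "\<exists>s r. e = p ^ s * r \<and> \<not> p dvd r"
  using assms(1)
proof (induction e rule: less_induct)
  case (less e)
  show ?case
  proof (cases "p dvd e")
    case False then show ?thesis by (intro exI[of _ 0] exI[of _ e]) auto
  next
    case True
    then obtain e' where e': "e = p * e'" by (auto elim: dvdE)
    then have "e' > 0" "e' < e" using less.prems assms(2) by auto
    then obtain s r where "e' = p ^ s * r" "\<not> p dvd r" using less.IH by blast
    then show ?thesis using e' by (intro exI[of _ "Suc s"] exI[of _ r]) auto
  qed
qed

lemma four_dvd_pow2:
  fixes e :: nat
  assumes "e = 2 ^ s" "even e" "e \<noteq> 2"
  shows "4 dvd e"
proof -
  have "s \<noteq> 0" using assms by auto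
  moreover have "s \<noteq> 1" using assms by auto
  ultimately have "2 \<le> s" by arith
  then have "(2::nat) ^ 2 dvd 2 ^ s" by (rule le_imp_power_dvd)
  then show ?thesis using assms by simp
qed

lemma notPP_nonmod:
  assumes n1: "n \<ge> 1" and nP: "\<not> PP n"
  shows "\<not> modular_lattice_family (SS n)"
proof -
  obtain e1 e2 where e: "e1 dvd n" "e2 dvd n" "even e1" "even e2" "e1 \<noteq> 2" "e2 \<noteq> 2" "gcd e1 e2 = 2"
    using nP unfolding PP_def by blast
  have e10: "e1 > 0" and e20: "e2 > 0" using e(1,2) n1 by (auto intro: Nat.gr0I)
  obtain s r1 where r1: "e1 = 2 ^ s * r1" "odd r1" using pow_decomp[OF e10, of 2] by auto
  obtain t r2 where r2: "e2 = 2 ^ t * r2" "odd r2" using pow_decomp[OF e20, of 2] by auto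
  show ?thesis
  proof (cases "r1 > 1")
    case True
    then show ?thesis using nonmod_SS[OF n1 e(1) e(2) e(4) e(6) e(7) r1(2) _ True] r1(1) by simp
  next
    case False
    note F1 = False
    show ?thesis
    proof (cases "r2 > 1")
      case True
      then show ?thesis using nonmod_SS[OF n1 e(2) e(1) e(3) e(5) _ r2(2) _ True] r2(1) e(7)
        by (simp add: gcd.commute)
    next
      case False
      have "r1 = 1" using F1 r1 by (cases r1) auto
      moreover have "r2 = 1" using False r2 by (cases r2) auto
      ultimately have "4 dvd e1" "4 dvd e2" using four_dvd_pow2 e r1 r2 by auto
      then have "4 dvd gcd e1 e2" by (rule gcd_greatest)
      then have "(4::nat) dvd 2" using e(7) by simp
      then show ?thesis by simp
    qed
  qed
qed

lemma PP_iff: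
  assumes n1: "n \<ge> 1"
  shows "PP n \<longleftrightarrow> (\<exists>\<alpha>::nat. n = 2 ^ \<alpha>) \<or> odd n \<or>
           (\<exists>(p::nat) (\<alpha>::nat). Factorial_Ring.prime p \<and> odd p \<and> \<alpha> \<ge> 1 \<and> n = 2 * p ^ \<alpha>)"
proof
  assume P: "PP n"
  show "(\<exists>\<alpha>::nat. n = 2 ^ \<alpha>) \<or> odd n \<or>
           (\<exists>(p::nat) (\<alpha>::nat). Factorial_Ring.prime p \<and> odd p \<and> \<alpha> \<ge> 1 \<and> n = 2 * p ^ \<alpha>)"
  proof (rule ccontr)
    assume H: "\<not> ?thesis"
    then have ev: "even n" and np: "\<And>\<alpha>. n \<noteq> 2 ^ \<alpha>" by auto
    obtain s r where sr: "n = 2 ^ s * r" "odd r" using pow_decomp[of n 2] n1 by auto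
    have r1: "r \<noteq> 1" using sr np[of s] by auto
    have s0: "s \<noteq> 0" using sr ev by auto
    show False
    proof (cases "s \<ge> 2")
      case True
      have "(2::nat) ^ 2 dvd 2 ^ s" using True by (rule le_imp_power_dvd)
      then have d4: "4 dvd n" using sr by simp
      have "2 * r dvd n" using sr s0 by (cases s) auto
      moreover have "gcd (2 * 2) (2 * r) = 2"
      proof -
        have "gcd (2 * 2) (2 * r) = 2 * gcd 2 r" by (rule gcd_mult_distrib_nat[symmetric])
        moreover have "coprime 2 r" using sr by simp
        ultimately show ?thesis by (simp add: coprime_iff_gcd_eq_1)
      qed
      moreover have "2 * r \<noteq> 2" using r1 by simp
      ultimately show False using P d4 unfolding PP_def by fastforce
    next
      case False
      then have n2r: "n = 2 * r" using sr s0 by (cases s) auto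
      obtain p where p: "Factorial_Ring.prime p" "p dvd r" using prime_factor_nat[OF r1] by auto
      have p1: "p > 1" by (rule prime_gt_1_nat[OF p(1)])
      have r0: "r > 0" using sr n1 by (auto intro: Nat.gr0I)
      obtain a y where ay: "r = p ^ a * y" "\<not> p dvd y" using pow_decomp[OF r0 p1] by auto
      have oddp: "odd p" using p sr by (metis dvd_trans)
      have a1: "a \<ge> 1" using ay p by (cases a) auto
      show False
      proof (cases "y = 1")
        case True
        then show False using H n2r ay p oddp a1 by auto
      next
        case False
        have "2 * p dvd n" using n2r p by simp
        moreover have "2 * y dvd n" using n2r ay by simp
        moreover have "coprime p y" using p ay by (simp add: prime_imp_coprime)
        then have "gcd (2 * p) (2 * y) = 2" by (simp add: gcd_mult_distrib_nat[symmetric] coprime_iff_gcd_eq_1)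
        moreover have "2 * p \<noteq> 2" "2 * y \<noteq> 2" using p1 False by auto
        ultimately show False using P unfolding PP_def by fastforce
      qed
    qed
  qed
next
  assume H: "(\<exists>\<alpha>::nat. n = 2 ^ \<alpha>) \<or> odd n \<or>
           (\<exists>(p::nat) (\<alpha>::nat). Factorial_Ring.prime p \<and> odd p \<and> \<alpha> \<ge> 1 \<and> n = 2 * p ^ \<alpha>)"
  show "PP n"
    unfolding PP_def
  proof (intro allI impI)
    fix e1 e2 :: nat
    assume e: "e1 dvd n" "e2 dvd n" "even e1" "even e2" "e1 \<noteq> 2" "e2 \<noteq> 2"
    show "gcd e1 e2 \<noteq> 2"
    proof (cases "odd n")
      case True then show ?thesis using e by (metis dvd_trans)
    next
      case False
      show ?thesis
      proof (cases "\<exists>\<alpha>::nat. n = 2 ^ \<alpha>")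
        case True
        then obtain \<alpha> where a: "n = 2 ^ \<alpha>" by auto
        obtain i where i: "e1 = 2 ^ i" using e(1) a divides_primepow_nat[of 2 e1 \<alpha>] by auto
        obtain j where j: "e2 = 2 ^ j" using e(2) a divides_primepow_nat[of 2 e2 \<alpha>] by auto
        have "4 dvd e1" "4 dvd e2" using four_dvd_pow2 e i j by auto
        then have "4 dvd gcd e1 e2" by (rule gcd_greatest)
        show ?thesis
        proof
          assume "gcd e1 e2 = 2"
          then have "(4::nat) dvd 2" using \<open>4 dvd gcd e1 e2\<close> by simp
          then show False by simp
        qed
      next
        case False
        then obtain p \<alpha> where pa: "Factorial_Ring.prime p" "odd p" "n = 2 * p ^ \<alpha>" using H \<open>\<not> odd n\<close> by auto
        have pdv: "p dvd e" if ed: "e dvd n" "even e" "e \<noteq> 2" for e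
        proof -
          obtain d where d: "e = 2 * d" using ed by (auto elim: evenE)
          then have "d dvd p ^ \<alpha>" using ed pa by simp
          then obtain i where i: "d = p ^ i" using divides_primepow_nat[OF pa(1)] by auto
          have "i \<noteq> 0" using i d ed by auto
          then have "p dvd d" using i by simp
          then show ?thesis using d by simp
        qed
        have pg: "p dvd gcd e1 e2" using pdv e by (intro gcd_greatest) auto
        moreover have "p > 2"
        proof -
          have "p > 1" by (rule prime_gt_1_nat[OF pa(1)])
          moreover have "p \<noteq> 2" using pa(2) by auto
          ultimately show ?thesis by arith
        qed
        ultimately show ?thesis
        proof (intro notI)
          assume "gcd e1 e2 = 2" "p > 2"
          then have "p dvd 2" using pg by simp
          then have "p \<le> 2" by (rule dvd_imp_le) simp
          then show False using \<open>p > 2\<close> by simp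
        qed
      qed
    qed
  qed
qed

theorem theorem2p10:
  fixes n :: nat
  assumes "n \<ge> 1"
  shows "modular_lattice_family (pi_poset (dihedral_group n)) \<longleftrightarrow>
           (\<exists>\<alpha>::nat. n = 2 ^ \<alpha>) \<or>
           odd n \<or>
           (\<exists>(p::nat) (\<alpha>::nat). Factorial_Ring.prime p \<and> odd p \<and> \<alpha> \<ge> 1 \<and> n = 2 * p ^ \<alpha>)"
proof -
  have "modular_lattice_family (pi_poset (dihedral_group n)) \<longleftrightarrow> modular_lattice_family (SS n)"
    using pi_poset_eq[OF assms] by simp
  also have "\<dots> \<longleftrightarrow> PP n" using modular_SS[OF assms] notPP_nonmod[OF assms] by blast
  also have "\<dots> \<longleftrightarrow> (\<exists>\<alpha>::nat. n = 2 ^ \<alpha>) \<or>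
           odd n \<or>
           (\<exists>(p::nat) (\<alpha>::nat). Factorial_Ring.prime p \<and> odd p \<and> \<alpha> \<ge> 1 \<and> n = 2 * p ^ \<alpha>)"
    by (rule PP_iff[OF assms])
  finally show ?thesis .
qed

end
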